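(* Let $X$ be an SE-space with Freudenthal compactification $FX$ such that $w(FX\setminus X)\leq\aleph_0$. Then $FX$ is an Eberlein compact.
   Context: "Space" means topological $T_0$-space; $w$ denotes weight. A family of subsets of a set is strongly point-finite if every countably infinite subfamily contains a finite subfamily with empty intersection. A space $X$ is an SE-space if it has a strongly point-finite family $\alpha$ of clopen subsets such that $\alpha\cup\{X\setminus V:V\in\alpha\}$ is a subbase of $X$ (such spaces are zero-dimensional Hausdorff, hence rim-compact). For a rim-compact space $X$, the Freudenthal compactification $FX$ is the largest Hausdorff compactification of $X$ whose remainder is zero-dimensionally embedded. An Eberlein compact is a compact Hausdorff space homeomorphic to a weakly compact subset of a Banach space. *)

theory Defs
  imports "HOL-Analysis.Analysis"
begin

definition strongly_point_finite :: "'a set set \<Rightarrow> bool" where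
  "strongly_point_finite \<A> \<longleftrightarrow>
     (\<forall>\<B> \<subseteq> \<A>. countable \<B> \<and> infinite \<B> \<longrightarrow>
        (\<exists>\<C> \<subseteq> \<B>. finite \<C> \<and> \<C> \<noteq> {} \<and> \<Inter>\<C> = {}))"

definition subbase_of :: "'a set set \<Rightarrow> 'a topology \<Rightarrow> bool" where
  "subbase_of \<S> X \<longleftrightarrow> (\<forall>S \<in> \<S>. S \<subseteq> topspace X) \<and> topology_generated_by \<S> = X"

definition SE_space :: "'a topology \<Rightarrow> bool" where
  "SE_space X \<longleftrightarrow> t0_space X \<and>
     (\<exists>\<A>. (\<forall>V \<in> \<A>. closedin X V \<and> openin X V) \<and> strongly_point_finite \<A> \<and>
          subbase_of (\<A> \<union> {topspace X - V | V. V \<in> \<A>}) X)"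

definition hausdorff_compactification :: "'a topology \<Rightarrow> 'b topology \<Rightarrow> ('a \<Rightarrow> 'b) \<Rightarrow> bool" where
  "hausdorff_compactification X K e \<longleftrightarrow>
     compact_space K \<and> Hausdorff_space K \<and> embedding_map X K e \<and>
     K closure_of (e ` topspace X) = topspace K"

definition zero_dim_embedded :: "'b topology \<Rightarrow> 'b set \<Rightarrow> bool" where
  "zero_dim_embedded K Y \<longleftrightarrow>
     (\<forall>y \<in> Y. \<forall>U. openin K U \<and> y \<in> U \<longrightarrow>
        (\<exists>V. openin K V \<and> y \<in> V \<and> V \<subseteq> U \<and> K frontier_of V \<inter> Y = {}))"

definition zd_compactification :: "'a topology \<Rightarrow> 'b topology \<Rightarrow> ('a \<Rightarrow> 'b) \<Rightarrow> bool" where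
  "zd_compactification X K e \<longleftrightarrow>
     hausdorff_compactification X K e \<and>
     zero_dim_embedded K (topspace K - e ` topspace X)"

definition compactification_ge :: "'b topology \<Rightarrow> ('a \<Rightarrow> 'b) \<Rightarrow> 'c topology \<Rightarrow> ('a \<Rightarrow> 'c) \<Rightarrow> bool" where
  "compactification_ge K e K' e' \<longleftrightarrow>
     (\<exists>g. continuous_map K K' g \<and> (\<forall>x. g (e x) = e' x))"

text \<open>Competing
compactifications are taken with points in the type 'a set set; every Hausdorff
compactification of X has cardinality at most 2^2^|X| and is therefore equivalent to one of
these.\<close>
definition freudenthal_compactification :: "'a topology \<Rightarrow> 'b topology \<Rightarrow> ('a \<Rightarrow> 'b) \<Rightarrow> bool" where
  "freudenthal_compactification X FX e \<longleftrightarrow>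
     zd_compactification X FX e \<and>
     (\<forall>(K :: 'a set set topology) e'. zd_compactification X K e' \<longrightarrow>
        compactification_ge FX e K e')"

definition real_banach_str ::
  "'v set \<Rightarrow> ('v \<Rightarrow> 'v \<Rightarrow> 'v) \<Rightarrow> (real \<Rightarrow> 'v \<Rightarrow> 'v) \<Rightarrow> 'v \<Rightarrow> ('v \<Rightarrow> real) \<Rightarrow> bool" where
  "real_banach_str V add scl z nrm \<longleftrightarrow>
     z \<in> V \<and>
     (\<forall>x\<in>V. \<forall>y\<in>V. add x y \<in> V) \<and> (\<forall>a. \<forall>x\<in>V. scl a x \<in> V) \<and>
     (\<forall>x\<in>V. \<forall>y\<in>V. \<forall>w\<in>V. add (add x y) w = add x (add y w)) \<and>
     (\<forall>x\<in>V. \<forall>y\<in>V. add x y = add y x) \<and>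
     (\<forall>x\<in>V. add x z = x) \<and>
     (\<forall>x\<in>V. \<exists>y\<in>V. add x y = z) \<and>
     (\<forall>a. \<forall>x\<in>V. \<forall>y\<in>V. scl a (add x y) = add (scl a x) (scl a y)) \<and>
     (\<forall>a b. \<forall>x\<in>V. scl (a + b) x = add (scl a x) (scl b x)) \<and>
     (\<forall>a b. \<forall>x\<in>V. scl a (scl b x) = scl (a * b) x) \<and>
     (\<forall>x\<in>V. scl 1 x = x) \<and>
     (\<forall>x\<in>V. nrm x = 0 \<longleftrightarrow> x = z) \<and>
     (\<forall>a. \<forall>x\<in>V. nrm (scl a x) = \<bar>a\<bar> * nrm x) \<and>
     (\<forall>x\<in>V. \<forall>y\<in>V. nrm (add x y) \<le> nrm x + nrm y) \<and>
     (\<forall>s :: nat \<Rightarrow> 'v. (\<forall>n. s n \<in> V) \<and>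
          (\<forall>\<epsilon>>0. \<exists>N. \<forall>m\<ge>N. \<forall>n\<ge>N. nrm (add (s m) (scl (-1) (s n))) < \<epsilon>) \<longrightarrow>
          (\<exists>x\<in>V. \<forall>\<epsilon>>0. \<exists>N. \<forall>n\<ge>N. nrm (add (s n) (scl (-1) x)) < \<epsilon>))"

definition dual_functional ::
  "'v set \<Rightarrow> ('v \<Rightarrow> 'v \<Rightarrow> 'v) \<Rightarrow> (real \<Rightarrow> 'v \<Rightarrow> 'v) \<Rightarrow> ('v \<Rightarrow> real) \<Rightarrow> ('v \<Rightarrow> real) \<Rightarrow> bool" where
  "dual_functional V add scl nrm f \<longleftrightarrow>
     (\<forall>x\<in>V. \<forall>y\<in>V. f (add x y) = f x + f y) \<and>
     (\<forall>a. \<forall>x\<in>V. f (scl a x) = a * f x) \<and>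
     (\<exists>C. \<forall>x\<in>V. \<bar>f x\<bar> \<le> C * nrm x)"

definition weak_topology ::
  "'v set \<Rightarrow> ('v \<Rightarrow> 'v \<Rightarrow> 'v) \<Rightarrow> (real \<Rightarrow> 'v \<Rightarrow> 'v) \<Rightarrow> ('v \<Rightarrow> real) \<Rightarrow> 'v topology" where
  "weak_topology V add scl nrm =
     topology_generated_by
       {{x \<in> V. f x \<in> U} | f U. dual_functional V add scl nrm f \<and> open U}"

text \<open>The Banach space is taken with vectors in the type 'b => real, which is large enough
to carry (an isometric copy of) the closed span of any weakly compact set
homeomorphic to K.\<close>
definition eberlein_compact :: "'b topology \<Rightarrow> bool" where
  "eberlein_compact K \<longleftrightarrow>
     (\<exists>(V :: ('b \<Rightarrow> real) set) add scl z nrm S.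
        real_banach_str V add scl z nrm \<and> S \<subseteq> V \<and>
        compactin (weak_topology V add scl nrm) S \<and>
        K homeomorphic_space subtopology (weak_topology V add scl nrm) S)"

end

theory Submission
  imports Defs "HOL-Library.Countable_Set_Type"
begin


definition c0V :: "'b set \<Rightarrow> ('b \<Rightarrow> real) set" where
  "c0V I = {u. (\<forall>t. t \<notin> I \<longrightarrow> u t = 0) \<and> (\<forall>\<epsilon>>0. finite {t. \<epsilon> \<le> \<bar>u t\<bar>})}"

definition c0add :: "('b \<Rightarrow> real) \<Rightarrow> ('b \<Rightarrow> real) \<Rightarrow> ('b \<Rightarrow> real)" where
  "c0add u v = (\<lambda>t. u t + v t)"
definition c0scl :: "real \<Rightarrow> ('b \<Rightarrow> real) \<Rightarrow> ('b \<Rightarrow> real)" where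
  "c0scl a u = (\<lambda>t. a * u t)"
definition c0nrm :: "('b \<Rightarrow> real) \<Rightarrow> real" where
  "c0nrm u = (SUP t. \<bar>u t\<bar>)"

lemma half_less_self': "(0::real) < e \<Longrightarrow> a \<le> e/2 \<Longrightarrow> a < e" by linarith

lemma c0V_bdd:
  assumes "u \<in> c0V I"
  shows "\<bar>u t\<bar> \<le> 1 + (\<Sum>s\<in>{s. 1 \<le> \<bar>u s\<bar>}. \<bar>u s\<bar>)"
proof -
  have fin: "finite {s. 1 \<le> \<bar>u s\<bar>}" using assms unfolding c0V_def by auto
  have nn: "0 \<le> (\<Sum>s\<in>{s. 1 \<le> \<bar>u s\<bar>}. \<bar>u s\<bar>)" by (simp add: sum_nonneg)
  show ?thesis
  proof (cases "1 \<le> \<bar>u t\<bar>")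
    case True
    then have "\<bar>u t\<bar> \<le> (\<Sum>s\<in>{s. 1 \<le> \<bar>u s\<bar>}. \<bar>u s\<bar>)"
      using fin by (intro member_le_sum) auto
    then show ?thesis by linarith
  next
    case False then show ?thesis using nn by linarith
  qed
qed

lemma c0V_bdd_above: "u \<in> c0V I \<Longrightarrow> bdd_above (range (\<lambda>t. \<bar>u t\<bar>))"
  by (rule bdd_aboveI2, rule c0V_bdd)

lemma c0nrm_ge: "u \<in> c0V I \<Longrightarrow> \<bar>u t\<bar> \<le> c0nrm u"
  unfolding c0nrm_def by (rule cSUP_upper) (auto intro: c0V_bdd_above)

lemma c0nrm_le: "(\<And>t. \<bar>u t\<bar> \<le> M) \<Longrightarrow> c0nrm u \<le> M"
  unfolding c0nrm_def by (rule cSUP_least) auto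

lemma c0nrm_nonneg: "u \<in> c0V I \<Longrightarrow> 0 \<le> c0nrm u"
  using c0nrm_ge[of u I undefined] by linarith

lemma c0V_add: assumes "u \<in> c0V I" "v \<in> c0V I" shows "c0add u v \<in> c0V I"
proof -
  have "finite {t. \<epsilon> \<le> \<bar>u t + v t\<bar>}" if "\<epsilon> > 0" for \<epsilon>
  proof -
    have hu: "\<forall>\<epsilon>>0. finite {t. \<epsilon> \<le> \<bar>u t\<bar>}" and hv: "\<forall>\<epsilon>>0. finite {t. \<epsilon> \<le> \<bar>v t\<bar>}"
      using assms unfolding c0V_def by auto
    have "finite ({t. \<epsilon>/2 \<le> \<bar>u t\<bar>} \<union> {t. \<epsilon>/2 \<le> \<bar>v t\<bar>})"
      using hu[rule_format, of "\<epsilon>/2"] hv[rule_format, of "\<epsilon>/2"] that by simp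
    moreover have "{t. \<epsilon> \<le> \<bar>u t + v t\<bar>} \<subseteq> {t. \<epsilon>/2 \<le> \<bar>u t\<bar>} \<union> {t. \<epsilon>/2 \<le> \<bar>v t\<bar>}"
      by auto
    ultimately show ?thesis by (rule finite_subset[rotated])
  qed
  then show ?thesis using assms unfolding c0V_def c0add_def by simp
qed

lemma c0V_scl: assumes "u \<in> c0V I" shows "c0scl a u \<in> c0V I"
proof (cases "a = 0")
  case True then show ?thesis unfolding c0V_def c0scl_def by auto
next
  case False
  have "finite {t. \<epsilon> \<le> \<bar>a * u t\<bar>}" if "\<epsilon> > 0" for \<epsilon>
  proof -
    have "{t. \<epsilon> \<le> \<bar>a * u t\<bar>} = {t. \<epsilon> / \<bar>a\<bar> \<le> \<bar>u t\<bar>}"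
      using False by (auto simp: abs_mult field_simps)
    then show ?thesis using assms that False unfolding c0V_def by auto
  qed
  then show ?thesis using assms unfolding c0V_def c0scl_def by auto
qed

lemma c0V_zero: "(\<lambda>t. 0) \<in> c0V I" unfolding c0V_def by auto

lemma c0nrm_scl: assumes "u \<in> c0V I" shows "c0nrm (c0scl a u) = \<bar>a\<bar> * c0nrm u"
proof (rule antisym)
  show "c0nrm (c0scl a u) \<le> \<bar>a\<bar> * c0nrm u"
    by (rule c0nrm_le) (auto simp: c0scl_def abs_mult intro: mult_left_mono c0nrm_ge[OF assms])
  show "\<bar>a\<bar> * c0nrm u \<le> c0nrm (c0scl a u)"
  proof (cases "a = 0")
    case True then show ?thesis using c0nrm_nonneg[OF c0V_scl[OF assms]] by simp
  next
    case False
    have "c0nrm u \<le> c0nrm (c0scl a u) / \<bar>a\<bar>"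
    proof (rule c0nrm_le)
      fix t
      have "\<bar>a\<bar> * \<bar>u t\<bar> \<le> c0nrm (c0scl a u)"
        using c0nrm_ge[OF c0V_scl[OF assms], of a t] by (simp add: c0scl_def abs_mult)
      then show "\<bar>u t\<bar> \<le> c0nrm (c0scl a u) / \<bar>a\<bar>" using False by (simp add: field_simps)
    qed
    then show ?thesis using False by (simp add: field_simps)
  qed
qed

lemma c0nrm_add: assumes "u \<in> c0V I" "v \<in> c0V I" shows "c0nrm (c0add u v) \<le> c0nrm u + c0nrm v"
proof (rule c0nrm_le)
  fix t
  have "\<bar>u t + v t\<bar> \<le> \<bar>u t\<bar> + \<bar>v t\<bar>" by (rule abs_triangle_ineq)
  also have "\<dots> \<le> c0nrm u + c0nrm v" using c0nrm_ge[OF assms(1)] c0nrm_ge[OF assms(2)] by (intro add_mono)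
  finally show "\<bar>c0add u v t\<bar> \<le> c0nrm u + c0nrm v" by (simp add: c0add_def)
qed

lemma c0nrm_zero_iff: assumes "u \<in> c0V I" shows "c0nrm u = 0 \<longleftrightarrow> u = (\<lambda>t. 0)"
proof
  assume "c0nrm u = 0"
  then have "\<bar>u t\<bar> \<le> 0" for t using c0nrm_ge[OF assms, of t] by simp
  then show "u = (\<lambda>t. 0)" by auto
next
  assume "u = (\<lambda>t. 0)"
  then show "c0nrm u = 0" unfolding c0nrm_def by simp
qed

lemma c0_complete:
  fixes s :: "nat \<Rightarrow> 'b \<Rightarrow> real"
  assumes s: "\<forall>n. s n \<in> c0V I"
    and cau: "\<forall>\<epsilon>>0. \<exists>N. \<forall>m\<ge>N. \<forall>n\<ge>N. c0nrm (c0add (s m) (c0scl (-1) (s n))) < \<epsilon>"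
  shows "\<exists>x\<in>c0V I. \<forall>\<epsilon>>0. \<exists>N. \<forall>n\<ge>N. c0nrm (c0add (s n) (c0scl (-1) x)) < \<epsilon>"
proof -
  have diff: "\<bar>s m t - s n t\<bar> \<le> c0nrm (c0add (s m) (c0scl (-1) (s n)))" for m n t
    using c0nrm_ge[OF c0V_add[OF s[rule_format, of m] c0V_scl[OF s[rule_format, of n], of "-1"]], of t]
    by (simp add: c0add_def c0scl_def)
  have "Cauchy (\<lambda>n. s n t)" for t
  proof (rule CauchyI)
    fix e :: real assume "e > 0"
    then obtain N where N: "\<forall>m\<ge>N. \<forall>n\<ge>N. c0nrm (c0add (s m) (c0scl (-1) (s n))) < e"
      using cau by blast
    have "\<bar>s m t - s n t\<bar> < e" if "m \<ge> N" "n \<ge> N" for m n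
      using N that diff[of m t n] by fastforce
    then show "\<exists>M. \<forall>m\<ge>M. \<forall>n\<ge>M. norm (s m t - s n t) < e" by auto
  qed
  then have "convergent (\<lambda>n. s n t)" for t by (simp add: Cauchy_convergent_iff)
  then obtain x where x: "\<And>t. (\<lambda>n. s n t) \<longlonglongrightarrow> x t"
    unfolding convergent_def by metis
  have close: "\<bar>s m t - x t\<bar> \<le> e" if "\<forall>m\<ge>N. \<forall>n\<ge>N. c0nrm (c0add (s m) (c0scl (-1) (s n))) < e" "m \<ge> N" for m N t e
  proof -
    have "(\<lambda>n. \<bar>s m t - s n t\<bar>) \<longlonglongrightarrow> \<bar>s m t - x t\<bar>"
      by (intro tendsto_intros x)
    moreover have "\<forall>\<^sub>F n in sequentially. \<bar>s m t - s n t\<bar> \<le> e"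
      using that diff unfolding eventually_sequentially by (meson less_imp_le order.trans)
    ultimately show ?thesis by (rule tendsto_upperbound) simp
  qed
  have xV: "x \<in> c0V I"
    unfolding c0V_def
  proof (intro CollectI conjI allI impI)
    fix t assume "t \<notin> I"
    then have "s n t = 0" for n using s unfolding c0V_def by auto
    then show "x t = 0" using x[of t] by (simp add: LIMSEQ_const_iff)
  next
    fix \<epsilon> :: real assume "\<epsilon> > 0"
    then obtain N where N: "\<forall>m\<ge>N. \<forall>n\<ge>N. c0nrm (c0add (s m) (c0scl (-1) (s n))) < \<epsilon>/2"
      using cau by (meson half_gt_zero)
    have "{t. \<epsilon> \<le> \<bar>x t\<bar>} \<subseteq> {t. \<epsilon>/2 \<le> \<bar>s N t\<bar>}"
    proof
      fix t assume "t \<in> {t. \<epsilon> \<le> \<bar>x t\<bar>}"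
      then show "t \<in> {t. \<epsilon>/2 \<le> \<bar>s N t\<bar>}" using close[OF N le_refl, of t] by (auto simp: abs_if split: if_splits)
    qed
    moreover have "finite {t. \<epsilon>/2 \<le> \<bar>s N t\<bar>}"
    proof -
      have "\<forall>\<epsilon>>0. finite {t. \<epsilon> \<le> \<bar>s N t\<bar>}" using s unfolding c0V_def by auto
      then show ?thesis using \<open>\<epsilon>>0\<close> by (meson half_gt_zero)
    qed
    ultimately show "finite {t. \<epsilon> \<le> \<bar>x t\<bar>}" by (rule finite_subset)
  qed
  show ?thesis
  proof (intro bexI[OF _ xV] allI impI)
    fix \<epsilon> :: real assume "\<epsilon> > 0"
    then obtain N where N: "\<forall>m\<ge>N. \<forall>n\<ge>N. c0nrm (c0add (s m) (c0scl (-1) (s n))) < \<epsilon>/2"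
      using cau by (meson half_gt_zero)
    have "c0nrm (c0add (s n) (c0scl (-1) x)) \<le> \<epsilon>/2" if "n \<ge> N" for n
      by (rule c0nrm_le) (use close[OF N that] in \<open>simp add: c0add_def c0scl_def\<close>)
    then show "\<exists>N. \<forall>n\<ge>N. c0nrm (c0add (s n) (c0scl (-1) x)) < \<epsilon>"
      using \<open>\<epsilon>>0\<close> by (intro exI[of _ N] allI impI) (meson half_less_self' less_le_trans)
  qed
qed

lemma c0_banach: "real_banach_str (c0V (I::'b set)) c0add c0scl (\<lambda>t. 0) c0nrm"
  unfolding real_banach_str_def
proof (intro conjI ballI allI impI)
  show "(\<lambda>t. 0) \<in> c0V I" by (rule c0V_zero)
next
  fix x y assume "x \<in> c0V I" "y \<in> c0V I" then show "c0add x y \<in> c0V I" by (rule c0V_add)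
next
  fix a x assume "x \<in> c0V I" then show "c0scl a x \<in> c0V I" by (rule c0V_scl)
next
  fix x assume "x \<in> c0V I"
  then show "\<exists>y\<in>c0V I. c0add x y = (\<lambda>t. 0)"
    using c0V_scl[of x I "-1"] by (intro bexI[of _ "c0scl (-1) x"]) (auto simp: c0add_def c0scl_def)
next
  fix x assume "x \<in> c0V I" then show "c0nrm x = 0 \<longleftrightarrow> x = (\<lambda>t. 0)" by (rule c0nrm_zero_iff)
next
  fix a x assume "x \<in> c0V I" then show "c0nrm (c0scl a x) = \<bar>a\<bar> * c0nrm x" by (rule c0nrm_scl)
next
  fix x y assume "x \<in> c0V I" "y \<in> c0V I" then show "c0nrm (c0add x y) \<le> c0nrm x + c0nrm y"
    by (rule c0nrm_add)
next
  fix s :: "nat \<Rightarrow> 'b \<Rightarrow> real" assume "(\<forall>n. s n \<in> c0V I) \<and> (\<forall>\<epsilon>>0. \<exists>N. \<forall>m\<ge>N. \<forall>n\<ge>N. c0nrm (c0add (s m) (c0scl (- 1) (s n))) < \<epsilon>)"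
  then show "\<exists>x\<in>c0V I. \<forall>\<epsilon>>0. \<exists>N. \<forall>n\<ge>N. c0nrm (c0add (s n) (c0scl (- 1) x)) < \<epsilon>"
    using c0_complete[where s=s and I=I] by blast
qed (auto simp: c0add_def c0scl_def algebra_simps)


definition et :: "'b \<Rightarrow> 'b \<Rightarrow> real" where "et t = (\<lambda>s. if s = t then 1 else 0)"
definition trunc :: "'b set \<Rightarrow> ('b \<Rightarrow> real) \<Rightarrow> ('b \<Rightarrow> real)" where
  "trunc G w = (\<lambda>s. if s \<in> G then w s else 0)"

lemma c0V_finsupp:
  assumes "finite G" "G \<subseteq> I" "\<And>s. s \<notin> G \<Longrightarrow> u s = 0"
  shows "u \<in> c0V I"
proof -
  have "finite {t. \<epsilon> \<le> \<bar>u t\<bar>}" if "\<epsilon> > 0" for \<epsilon>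
    by (rule finite_subset[OF _ assms(1)]) (use assms(3) that in force)
  then show ?thesis unfolding c0V_def using assms by auto
qed

lemma et_in: "t \<in> I \<Longrightarrow> et t \<in> c0V I"
  by (rule c0V_finsupp[of "{t}"]) (auto simp: et_def)

lemma trunc_in: "finite G \<Longrightarrow> G \<subseteq> I \<Longrightarrow> trunc G w \<in> c0V I"
  by (rule c0V_finsupp[of G]) (auto simp: trunc_def)

lemma dual_zero:
  assumes "dual_functional (c0V I) c0add c0scl c0nrm f"
  shows "f (\<lambda>t. 0) = 0"
proof -
  have "f (c0scl 0 (\<lambda>t. 0)) = 0 * f (\<lambda>t. 0)"
    using assms c0V_zero unfolding dual_functional_def by blast
  then show ?thesis by (simp add: c0scl_def)
qed

lemma dual_lin_sum:
  assumes f: "dual_functional (c0V I) c0add c0scl c0nrm f"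
    and "finite G" "G \<subseteq> I"
  shows "f (trunc G w) = (\<Sum>t\<in>G. w t * f (et t))"
  using assms(2,3)
proof (induction G rule: finite_induct)
  case empty
  have "trunc {} w = (\<lambda>t. 0)" by (simp add: trunc_def)
  then show ?case using dual_zero[OF f] by simp
next
  case (insert t G)
  have eq: "trunc (insert t G) w = c0add (c0scl (w t) (et t)) (trunc G w)"
    using insert.hyps by (auto simp: trunc_def c0add_def c0scl_def et_def fun_eq_iff)
  have in1: "c0scl (w t) (et t) \<in> c0V I" using insert.prems by (intro c0V_scl et_in) auto
  have in2: "trunc G w \<in> c0V I" using insert by (intro trunc_in) auto
  have "f (trunc (insert t G) w) = f (c0scl (w t) (et t)) + f (trunc G w)"
    using f in1 in2 unfolding eq dual_functional_def by blast
  also have "f (c0scl (w t) (et t)) = w t * f (et t)"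
    using f et_in[of t I] insert.prems unfolding dual_functional_def by blast
  finally show ?case using insert by simp
qed

lemma dual_bound:
  assumes f: "dual_functional (c0V I) c0add c0scl c0nrm f"
  obtains C where "C \<ge> 0" "\<And>x. x \<in> c0V I \<Longrightarrow> \<bar>f x\<bar> \<le> C * c0nrm x"
proof -
  obtain C where C: "\<forall>x\<in>c0V I. \<bar>f x\<bar> \<le> C * c0nrm x" using f unfolding dual_functional_def by blast
  have "\<bar>f x\<bar> \<le> \<bar>C\<bar> * c0nrm x" if "x \<in> c0V I" for x
  proof -
    have "C * c0nrm x \<le> \<bar>C\<bar> * c0nrm x"
      using c0nrm_nonneg[OF that] by (intro mult_right_mono) auto
    then show ?thesis using C that by fastforce
  qed
  then show ?thesis using that[of "\<bar>C\<bar>"] by auto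
qed

lemma dual_sumabs:
  assumes f: "dual_functional (c0V I) c0add c0scl c0nrm f"
    and C: "\<And>x. x \<in> c0V I \<Longrightarrow> \<bar>f x\<bar> \<le> C * c0nrm x" "C \<ge> 0"
    and G: "finite G" "G \<subseteq> I"
  shows "(\<Sum>t\<in>G. \<bar>f (et t)\<bar>) \<le> C"
proof -
  define w where "w = trunc G (\<lambda>s. sgn (f (et s)))"
  have wV: "w \<in> c0V I" unfolding w_def using G by (rule trunc_in)
  have "f w = (\<Sum>t\<in>G. sgn (f (et t)) * f (et t))"
    unfolding w_def using dual_lin_sum[OF f G] by (simp add: trunc_def)
  also have "\<dots> = (\<Sum>t\<in>G. \<bar>f (et t)\<bar>)"
    by (intro sum.cong refl) (simp add: abs_sgn mult.commute)
  finally have fw: "f w = (\<Sum>t\<in>G. \<bar>f (et t)\<bar>)" .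
  have "c0nrm w \<le> 1"
    by (rule c0nrm_le) (auto simp: w_def trunc_def abs_sgn_eq)
  then have "C * c0nrm w \<le> C" using C(2) by (simp add: mult_left_le)
  then show ?thesis using C(1)[OF wV] fw by linarith
qed

lemma dual_approx:
  assumes f: "dual_functional (c0V I) c0add c0scl c0nrm f" and "\<epsilon> > 0"
  shows "\<exists>F. finite F \<and> F \<subseteq> I \<and>
           (\<forall>w\<in>c0V I. c0nrm w \<le> 1 \<longrightarrow> \<bar>f w - (\<Sum>t\<in>F. w t * f (et t))\<bar> \<le> \<epsilon>)"
proof -
  obtain C where C: "C \<ge> 0" "\<And>x. x \<in> c0V I \<Longrightarrow> \<bar>f x\<bar> \<le> C * c0nrm x"
    using dual_bound[OF f] by blast
  define a where "a t = f (et t)" for t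
  define SS where "SS = {(\<Sum>t\<in>G. \<bar>a t\<bar>) | G. finite G \<and> G \<subseteq> I}"
  have SSb: "x \<le> C" if "x \<in> SS" for x
    using that dual_sumabs[OF f C(2) C(1)] unfolding SS_def a_def by auto
  have SSne: "SS \<noteq> {}" unfolding SS_def by auto
  have bdd: "bdd_above SS" using SSb by (meson bdd_above_def)
  obtain y where y: "y \<in> SS" "Sup SS - \<epsilon>/2 < y"
    using less_cSupE[OF _ SSne, of "Sup SS - \<epsilon>/2"] \<open>\<epsilon>>0\<close> by auto
  then obtain F0 where F0: "finite F0" "F0 \<subseteq> I" "y = (\<Sum>t\<in>F0. \<bar>a t\<bar>)"
    unfolding SS_def by auto
  have tail: "(\<Sum>t\<in>G. \<bar>a t\<bar>) < \<epsilon>/2" if G: "finite G" "G \<subseteq> I" "G \<inter> F0 = {}" for G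
  proof -
    have "(\<Sum>t\<in>G \<union> F0. \<bar>a t\<bar>) \<in> SS" unfolding SS_def using G F0 by blast
    then have "(\<Sum>t\<in>G \<union> F0. \<bar>a t\<bar>) \<le> Sup SS" using bdd by (rule cSup_upper)
    moreover have "(\<Sum>t\<in>G \<union> F0. \<bar>a t\<bar>) = (\<Sum>t\<in>G. \<bar>a t\<bar>) + (\<Sum>t\<in>F0. \<bar>a t\<bar>)"
      using G F0 by (intro sum.union_disjoint) auto
    ultimately show ?thesis using y F0 by linarith
  qed
  define \<delta> where "\<delta> = \<epsilon> / (2 * (C + 1))"
  have \<delta>pos: "\<delta> > 0" unfolding \<delta>_def using C \<open>\<epsilon>>0\<close> by auto
  have C\<delta>: "C * \<delta> < \<epsilon>/2"
  proof -
    have "C * \<delta> = \<epsilon>/2 * (C / (C+1))" unfolding \<delta>_def using C by (simp add: field_simps)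
    also have "\<dots> < \<epsilon>/2" using C \<open>\<epsilon>>0\<close> by (simp add: field_simps)
    finally show ?thesis .
  qed
  have main: "\<bar>f w - (\<Sum>t\<in>F0. w t * a t)\<bar> \<le> \<epsilon>" if w: "w \<in> c0V I" "c0nrm w \<le> 1" for w
  proof -
    define G where "G = F0 \<union> {t. \<delta> \<le> \<bar>w t\<bar>}"
    have Gfin: "finite G" unfolding G_def using F0 w \<delta>pos unfolding c0V_def by auto
    have GI: "G \<subseteq> I"
    proof -
      have "{t. \<delta> \<le> \<bar>w t\<bar>} \<subseteq> I" using w \<delta>pos unfolding c0V_def by force
      then show ?thesis unfolding G_def using F0 by auto
    qed
    define r where "r = c0add w (c0scl (-1) (trunc G w))"
    have rV: "r \<in> c0V I" unfolding r_def using w Gfin GI by (intro c0V_add c0V_scl trunc_in)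
    have "c0nrm r \<le> \<delta>"
      by (rule c0nrm_le) (use \<delta>pos in \<open>auto simp: r_def c0add_def c0scl_def trunc_def G_def\<close>)
    then have fr: "\<bar>f r\<bar> < \<epsilon>/2"
    proof -
      have "C * c0nrm r \<le> C * \<delta>" using \<open>c0nrm r \<le> \<delta>\<close> C(1) by (rule mult_left_mono)
      then show ?thesis using C(2)[OF rV] C\<delta> by linarith
    qed
    have weq: "w = c0add (trunc G w) r"
      by (auto simp: r_def c0add_def c0scl_def trunc_def fun_eq_iff)
    have "f w = f (trunc G w) + f r"
      using f trunc_in[OF Gfin GI] rV weq unfolding dual_functional_def by metis
    also have "f (trunc G w) = (\<Sum>t\<in>G. w t * a t)"
      unfolding a_def by (rule dual_lin_sum[OF f Gfin GI])
    also have "\<dots> = (\<Sum>t\<in>F0. w t * a t) + (\<Sum>t\<in>G - F0. w t * a t)"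
    proof -
      have "G = F0 \<union> (G - F0)" unfolding G_def by auto
      then show ?thesis using Gfin F0 by (metis sum.subset_diff Diff_subset_conv sup.cobounded1 add.commute Un_upper1)
    qed
    finally have eq: "f w - (\<Sum>t\<in>F0. w t * a t) = (\<Sum>t\<in>G - F0. w t * a t) + f r" by simp
    have "\<bar>\<Sum>t\<in>G - F0. w t * a t\<bar> \<le> (\<Sum>t\<in>G - F0. \<bar>a t\<bar>)"
    proof -
      have "\<bar>\<Sum>t\<in>G - F0. w t * a t\<bar> \<le> (\<Sum>t\<in>G - F0. \<bar>w t * a t\<bar>)" by (rule sum_abs)
      also have "\<dots> \<le> (\<Sum>t\<in>G - F0. \<bar>a t\<bar>)"
      proof (intro sum_mono)
        fix t
        have "\<bar>w t\<bar> \<le> 1" using c0nrm_ge[OF w(1), of t] w(2) by linarith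
        then show "\<bar>w t * a t\<bar> \<le> \<bar>a t\<bar>" by (simp add: abs_mult mult_left_le_one_le)
      qed
      finally show ?thesis .
    qed
    also have "\<dots> < \<epsilon>/2" using Gfin GI by (intro tail) auto
    finally show ?thesis using eq fr by linarith
  qed
  show ?thesis using F0 main unfolding a_def by blast
qed


lemma uniform_approx_continuous:
  fixes h :: "'a \<Rightarrow> real"
  assumes "\<And>\<epsilon>. \<epsilon> > 0 \<Longrightarrow> \<exists>g. continuous_map K euclideanreal g \<and> (\<forall>x\<in>topspace K. \<bar>h x - g x\<bar> \<le> \<epsilon>)"
  shows "continuous_map K euclideanreal h"
  unfolding continuous_map_def
proof (intro conjI allI impI)
  show "h \<in> topspace K \<rightarrow> topspace euclideanreal" by simp
  fix U :: "real set" assume "openin euclideanreal U"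
  then have U: "open U" by simp
  show "openin K {x \<in> topspace K. h x \<in> U}"
  proof (subst openin_subopen, intro ballI)
    fix x assume x: "x \<in> {x \<in> topspace K. h x \<in> U}"
    then obtain r where r: "r > 0" "ball (h x) r \<subseteq> U" using U openE by blast
    obtain g where g: "continuous_map K euclideanreal g" "\<forall>x\<in>topspace K. \<bar>h x - g x\<bar> \<le> r/4"
      using assms[of "r/4"] r by auto
    define W where "W = {y \<in> topspace K. g y \<in> ball (g x) (r/4)}"
    have "openin K W" unfolding W_def by (rule openin_continuous_map_preimage[OF g(1)]) simp
    moreover have "x \<in> W" unfolding W_def using x r by auto
    moreover have "W \<subseteq> {x \<in> topspace K. h x \<in> U}"
    proof
      fix y assume y: "y \<in> W"
      then have "\<bar>g y - g x\<bar> < r/4" "y \<in> topspace K" unfolding W_def by (auto simp: dist_real_def abs_minus_commute)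
      moreover have "\<bar>h x - g x\<bar> \<le> r/4" "\<bar>h y - g y\<bar> \<le> r/4" using g x \<open>y \<in> topspace K\<close> by auto
      ultimately have "\<bar>h y - h x\<bar> < r" by (auto simp: abs_if split: if_splits)
      then have "h y \<in> ball (h x) r" by (simp add: dist_real_def abs_minus_commute)
      then show "y \<in> {x \<in> topspace K. h x \<in> U}" using r \<open>y \<in> topspace K\<close> by auto
    qed
    ultimately show "\<exists>T. openin K T \<and> x \<in> T \<and> T \<subseteq> {x \<in> topspace K. h x \<in> U}" by blast
  qed
qed

lemma eberlein_criterion:
  fixes K :: "'b topology" and I :: "'b set" and c :: "'b \<Rightarrow> 'b \<Rightarrow> real"
  assumes K: "compact_space K" "Hausdorff_space K"
    and cont: "\<And>t. t \<in> I \<Longrightarrow> continuous_map K euclideanreal (c t)"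
    and bd: "\<And>t p. t \<in> I \<Longrightarrow> p \<in> topspace K \<Longrightarrow> \<bar>c t p\<bar> \<le> 1"
    and fin: "\<And>p \<epsilon>. p \<in> topspace K \<Longrightarrow> \<epsilon> > 0 \<Longrightarrow> finite {t\<in>I. \<epsilon> \<le> \<bar>c t p\<bar>}"
    and sep: "\<And>p q. p \<in> topspace K \<Longrightarrow> q \<in> topspace K \<Longrightarrow> p \<noteq> q \<Longrightarrow> \<exists>t\<in>I. c t p \<noteq> c t q"
  shows "eberlein_compact K"
proof -
  define \<phi> where "\<phi> p = (\<lambda>t. if t \<in> I then c t p else 0)" for p
  define V where "V = c0V I"
  define W where "W = weak_topology V c0add c0scl c0nrm"
  have \<phi>V: "\<phi> p \<in> V" if "p \<in> topspace K" for p
  proof -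
    have "{t. \<epsilon> \<le> \<bar>\<phi> p t\<bar>} = {t\<in>I. \<epsilon> \<le> \<bar>c t p\<bar>}" if "\<epsilon> > 0" for \<epsilon>
      using that by (auto simp: \<phi>_def)
    then show ?thesis unfolding V_def c0V_def using fin[OF that] by (auto simp: \<phi>_def)
  qed
  have \<phi>n: "c0nrm (\<phi> p) \<le> 1" if "p \<in> topspace K" for p
    by (rule c0nrm_le) (auto simp: \<phi>_def bd[OF _ that])
  define SB where "SB = {{x \<in> V. f x \<in> U} | f U. dual_functional V c0add c0scl c0nrm f \<and> open U}"
  have W_eq: "W = topology_generated_by SB" unfolding W_def weak_topology_def SB_def by simp
  have zero_dual: "dual_functional V c0add c0scl c0nrm (\<lambda>x. 0)"
    unfolding dual_functional_def by (auto intro!: exI[of _ 0])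
  have VSB: "V \<in> SB" unfolding SB_def using zero_dual by (intro CollectI exI[of _ "\<lambda>x. 0"] exI[of _ UNIV]) auto
  have topW: "topspace W = V"
  proof -
    have "\<Union>SB \<subseteq> V" unfolding SB_def by auto
    then show ?thesis unfolding W_eq topology_generated_by_topspace using VSB by blast
  qed
  have fcont: "continuous_map K euclideanreal (\<lambda>p. f (\<phi> p))"
    if f: "dual_functional V c0add c0scl c0nrm f" for f
  proof (rule uniform_approx_continuous)
    fix \<epsilon> :: real assume "\<epsilon> > 0"
    then obtain F where F: "finite F" "F \<subseteq> I"
      "\<forall>w\<in>c0V I. c0nrm w \<le> 1 \<longrightarrow> \<bar>f w - (\<Sum>t\<in>F. w t * f (et t))\<bar> \<le> \<epsilon>"
      using dual_approx[of I f \<epsilon>] f unfolding V_def by blast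
    show "\<exists>g. continuous_map K euclideanreal g \<and> (\<forall>x\<in>topspace K. \<bar>f (\<phi> x) - g x\<bar> \<le> \<epsilon>)"
    proof (intro exI conjI ballI)
      show "continuous_map K euclideanreal (\<lambda>p. \<Sum>t\<in>F. c t p * f (et t))"
        using F by (intro continuous_map_sum continuous_map_real_mult_right cont) auto
      fix x assume "x \<in> topspace K"
      then have "\<bar>f (\<phi> x) - (\<Sum>t\<in>F. \<phi> x t * f (et t))\<bar> \<le> \<epsilon>"
        using F(3) \<phi>V \<phi>n unfolding V_def by blast
      moreover have "(\<Sum>t\<in>F. \<phi> x t * f (et t)) = (\<Sum>t\<in>F. c t x * f (et t))"
        using F(2) by (intro sum.cong) (auto simp: \<phi>_def)
      ultimately show "\<bar>f (\<phi> x) - (\<Sum>t\<in>F. c t x * f (et t))\<bar> \<le> \<epsilon>" by simp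
    qed
  qed
  have \<phi>cont: "continuous_map K W \<phi>"
    unfolding W_eq
  proof (rule continuous_on_generated_topo)
    fix B assume "B \<in> SB"
    then obtain f U where fU: "B = {x \<in> V. f x \<in> U}" "dual_functional V c0add c0scl c0nrm f" "open U"
      unfolding SB_def by blast
    have "\<phi> -` B \<inter> topspace K = {p \<in> topspace K. f (\<phi> p) \<in> U}"
      using \<phi>V fU(1) by auto
    moreover have "openin K {p \<in> topspace K. f (\<phi> p) \<in> U}"
      using fcont[OF fU(2)] fU(3) by (simp add: continuous_map_def)
    ultimately show "openin K (\<phi> -` B \<inter> topspace K)" by simp
  next
    show "\<phi> ` topspace K \<subseteq> \<Union> SB" using \<phi>V VSB by blast
  qed
  have HW: "Hausdorff_space W"
    unfolding Hausdorff_space_def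
  proof (intro allI impI, elim conjE)
    fix u v assume uv: "u \<in> topspace W" "v \<in> topspace W" "u \<noteq> v"
    then obtain t where t: "u t \<noteq> v t" by (auto simp: fun_eq_iff)
    define d where "d = \<bar>u t - v t\<bar> / 2"
    have d: "d > 0" using t unfolding d_def by auto
    have pd: "dual_functional V c0add c0scl c0nrm (\<lambda>x. x t)"
      unfolding dual_functional_def V_def
      by (auto simp: c0add_def c0scl_def intro!: exI[of _ 1] c0nrm_ge)
    define U1 where "U1 = {x \<in> V. x t \<in> ball (u t) d}"
    define U2 where "U2 = {x \<in> V. x t \<in> ball (v t) d}"
    have "openin W U1" unfolding W_eq U1_def
      by (rule topology_generated_by_Basis, unfold SB_def,
          intro CollectI exI[of _ "\<lambda>x. x t"] exI[of _ "ball (u t) d"] conjI refl pd) auto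
    moreover have "openin W U2" unfolding W_eq U2_def
      by (rule topology_generated_by_Basis, unfold SB_def,
          intro CollectI exI[of _ "\<lambda>x. x t"] exI[of _ "ball (v t) d"] conjI refl pd) auto
    moreover have "u \<in> U1" "v \<in> U2" using uv d topW unfolding U1_def U2_def by auto
    moreover have "disjnt U1 U2"
    proof -
      have "ball (u t) d \<inter> ball (v t) d = {}"
        unfolding d_def by (auto simp: dist_real_def abs_if split: if_splits)
      then show ?thesis unfolding disjnt_def U1_def U2_def by blast
    qed
    ultimately show "\<exists>U1 U2. openin W U1 \<and> openin W U2 \<and> u \<in> U1 \<and> v \<in> U2 \<and> disjnt U1 U2" by blast
  qed
  have inj: "inj_on \<phi> (topspace K)"
  proof (rule inj_onI)
    fix p q assume "p \<in> topspace K" "q \<in> topspace K" "\<phi> p = \<phi> q"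
    show "p = q"
    proof (rule ccontr)
      assume "p \<noteq> q"
      then obtain t where "t \<in> I" "c t p \<noteq> c t q" using sep \<open>p \<in> topspace K\<close> \<open>q \<in> topspace K\<close> by blast
      then have "\<phi> p t \<noteq> \<phi> q t" by (simp add: \<phi>_def)
      then show False using \<open>\<phi> p = \<phi> q\<close> by simp
    qed
  qed
  have emb: "embedding_map K W \<phi>"
    by (rule continuous_imp_embedding_map[OF \<phi>cont K(1) HW inj])
  define S where "S = \<phi> ` topspace K"
  have "compactin W S" unfolding S_def
    using image_compactin[OF K(1)[unfolded compact_space_def] \<phi>cont] .
  moreover have "S \<subseteq> V" unfolding S_def using \<phi>V by auto
  moreover have "K homeomorphic_space subtopology W S"
    using emb unfolding embedding_map_def S_def by (rule homeomorphic_map_imp_homeomorphic_space)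
  moreover have "real_banach_str V c0add c0scl (\<lambda>t. 0) c0nrm" unfolding V_def by (rule c0_banach)
  ultimately show ?thesis unfolding eberlein_compact_def W_def by blast
qed


lemma gen_local_base:
  assumes "openin (topology_generated_by \<S>) U" "y \<in> U"
  shows "\<exists>F. finite F \<and> F \<noteq> {} \<and> F \<subseteq> \<S> \<and> y \<in> \<Inter>F \<and> \<Inter>F \<subseteq> U"
proof -
  have "generate_topology_on \<S> U" using assms(1) by (rule openin_topology_generated_by)
  then have "(arbitrary union_of finite' intersection_of (\<lambda>x. x \<in> \<S>)) U"
    by (simp add: generate_topology_on_eq)
  then obtain \<U> where U: "\<forall>W\<in>\<U>. (finite' intersection_of (\<lambda>x. x \<in> \<S>)) W" "\<Union>\<U> = U"
    unfolding union_of_def by auto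
  then obtain W where W: "W \<in> \<U>" "y \<in> W" using assms(2) by auto
  have "(finite' intersection_of (\<lambda>x. x \<in> \<S>)) W" using U(1) W(1) by blast
  then obtain F where "finite F" "F \<noteq> {}" "F \<subseteq> \<S>" "\<Inter>F = W"
    by (auto simp: intersection_of_def)
  then show ?thesis using W U(2) by auto
qed

lemma gen_Inter_open:
  assumes "finite F" "F \<noteq> {}" "F \<subseteq> \<S>"
  shows "openin (topology_generated_by \<S>) (\<Inter>F)"
  using assms by (intro openin_Inter) (auto intro: topology_generated_by_Basis)

lemma clopen_indicator_continuous:
  assumes "openin K S" "closedin K S"
  shows "continuous_map K euclideanreal (\<lambda>x. if x \<in> S then 1 else (0::real))"
  unfolding continuous_map_def
proof (intro conjI allI impI)
  show "(\<lambda>x. if x \<in> S then 1 else (0::real)) \<in> topspace K \<rightarrow> topspace euclideanreal" by simp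
  fix U :: "real set" assume "openin euclideanreal U"
  have C: "openin K (topspace K - S)" using assms(2) by (simp add: closedin_def)
  have S: "S \<subseteq> topspace K" using assms(1) by (rule openin_subset)
  consider "1 \<in> U" "0 \<in> U" | "1 \<in> U" "0 \<notin> U" | "1 \<notin> U" "0 \<in> U" | "1 \<notin> U" "0 \<notin> U" by blast
  then show "openin K {x \<in> topspace K. (if x \<in> S then 1 else 0) \<in> U}"
  proof cases
    case 1 then have "{x \<in> topspace K. (if x \<in> S then 1 else 0) \<in> U} = topspace K" by auto
    then show ?thesis by simp
  next
    case 2 then have "{x \<in> topspace K. (if x \<in> S then 1 else 0) \<in> U} = S" using S by auto
    then show ?thesis using assms(1) by simp
  next
    case 3 then have "{x \<in> topspace K. (if x \<in> S then 1 else 0) \<in> U} = topspace K - S" by auto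
    then show ?thesis using C by simp
  next
    case 4 then have "{x \<in> topspace K. (if x \<in> S then 1 else 0) \<in> U} = {}" by (auto split: if_splits)
    then show ?thesis by (metis openin_empty)
  qed
qed

definition SB1 :: "'a set set \<Rightarrow> 'a set set set set" where
  "SB1 \<A> = {{\<C> \<in> Pow \<A>. V \<in> \<C>} | V. V \<in> \<A>} \<union> {{\<C> \<in> Pow \<A>. V \<notin> \<C>} | V. V \<in> \<A>} \<union> {Pow \<A>}"

definition K1 :: "'a set set \<Rightarrow> 'a set set topology" where
  "K1 \<A> = topology_generated_by (SB1 \<A>)"

lemma topspace_K1: "topspace (K1 \<A>) = Pow \<A>"
  unfolding K1_def topology_generated_by_topspace SB1_def by auto

lemma K1_basic_open: "S \<in> SB1 \<A> \<Longrightarrow> openin (K1 \<A>) S"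
  unfolding K1_def by (rule topology_generated_by_Basis)

lemma K1_mem_open: "V \<in> \<A> \<Longrightarrow> openin (K1 \<A>) {\<C> \<in> Pow \<A>. V \<in> \<C>}"
  by (rule K1_basic_open) (auto simp: SB1_def)

lemma K1_notmem_open: "V \<in> \<A> \<Longrightarrow> openin (K1 \<A>) {\<C> \<in> Pow \<A>. V \<notin> \<C>}"
  by (rule K1_basic_open) (auto simp: SB1_def)

lemma K1_basic_closed:
  assumes "S \<in> SB1 \<A>" shows "closedin (K1 \<A>) S"
proof -
  have "S \<subseteq> Pow \<A>" using assms unfolding SB1_def by auto
  moreover have "openin (K1 \<A>) (Pow \<A> - S)"
  proof -
    consider V where "V \<in> \<A>" "S = {\<C> \<in> Pow \<A>. V \<in> \<C>}" | V where "V \<in> \<A>" "S = {\<C> \<in> Pow \<A>. V \<notin> \<C>}"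
      | "S = Pow \<A>" using assms unfolding SB1_def by blast
    then show ?thesis
    proof cases
      case (1 V)
      then have "Pow \<A> - S = {\<C> \<in> Pow \<A>. V \<notin> \<C>}" by auto
      then show ?thesis using K1_notmem_open[OF 1(1)] by simp
    next
      case (2 V)
      then have "Pow \<A> - S = {\<C> \<in> Pow \<A>. V \<in> \<C>}" by auto
      then show ?thesis using K1_mem_open[OF 2(1)] by simp
    next
      case 3 then show ?thesis by simp
    qed
  qed
  ultimately show ?thesis unfolding closedin_def topspace_K1 by auto
qed

lemma K1_local_clopen:
  assumes "openin (K1 \<A>) U" "y \<in> U"
  shows "\<exists>W. openin (K1 \<A>) W \<and> closedin (K1 \<A>) W \<and> y \<in> W \<and> W \<subseteq> U"
proof -
  obtain F where F: "finite F" "F \<noteq> {}" "F \<subseteq> SB1 \<A>" "y \<in> \<Inter>F" "\<Inter>F \<subseteq> U"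
    using gen_local_base[of "SB1 \<A>" U y] assms unfolding K1_def by blast
  have "openin (K1 \<A>) (\<Inter>F)" unfolding K1_def using F by (intro gen_Inter_open)
  moreover have "closedin (K1 \<A>) (\<Inter>F)" using F by (intro closedin_Inter K1_basic_closed) auto
  ultimately show ?thesis using F by blast
qed

lemma K1_Hausdorff: "Hausdorff_space (K1 \<A>)"
  unfolding Hausdorff_space_def topspace_K1
proof (intro allI impI, elim conjE)
  fix x y assume xy: "x \<in> Pow \<A>" "y \<in> Pow \<A>" "x \<noteq> y"
  then obtain V where V: "V \<in> \<A>" "(V \<in> x \<and> V \<notin> y) \<or> (V \<notin> x \<and> V \<in> y)" by blast
  show "\<exists>U W. openin (K1 \<A>) U \<and> openin (K1 \<A>) W \<and> x \<in> U \<and> y \<in> W \<and> disjnt U W"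
    using V(2)
  proof
    assume "V \<in> x \<and> V \<notin> y"
    then show ?thesis using xy K1_mem_open[OF V(1)] K1_notmem_open[OF V(1)]
      by (intro exI[of _ "{\<C> \<in> Pow \<A>. V \<in> \<C>}"] exI[of _ "{\<C> \<in> Pow \<A>. V \<notin> \<C>}"]) (auto simp: disjnt_def)
  next
    assume "V \<notin> x \<and> V \<in> y"
    then show ?thesis using xy K1_mem_open[OF V(1)] K1_notmem_open[OF V(1)]
      by (intro exI[of _ "{\<C> \<in> Pow \<A>. V \<notin> \<C>}"] exI[of _ "{\<C> \<in> Pow \<A>. V \<in> \<C>}"]) (auto simp: disjnt_def)
  qed
qed

lemma K1_compact: "compact_space (K1 \<A>)"
proof -
  define PT where "PT = product_topology (\<lambda>_. discrete_topology (UNIV::bool set)) \<A>"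
  define chi where "chi \<C> = restrict (\<lambda>V. V \<in> \<C>) \<A>" for \<C> :: "'a set set"
  define \<psi> where "\<psi> f = {V \<in> \<A>. f V}" for f :: "'a set \<Rightarrow> bool"
  have topPT: "topspace PT = PiE \<A> (\<lambda>_. UNIV)" unfolding PT_def by simp
  have c1: "continuous_map (K1 \<A>) PT chi"
    unfolding PT_def continuous_map_componentwise
  proof (intro conjI ballI)
    show "chi ` topspace (K1 \<A>) \<subseteq> extensional \<A>" unfolding chi_def by auto
    fix V assume V: "V \<in> \<A>"
    show "continuous_map (K1 \<A>) (discrete_topology UNIV) (\<lambda>x. chi x V)"
      unfolding continuous_map_def
    proof (intro conjI allI impI)
      show "(\<lambda>x. chi x V) \<in> topspace (K1 \<A>) \<rightarrow> topspace (discrete_topology UNIV)" by simp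
      fix B :: "bool set"
      have eq: "{x \<in> topspace (K1 \<A>). chi x V \<in> B} =
          (if True \<in> B then {\<C> \<in> Pow \<A>. V \<in> \<C>} else {}) \<union> (if False \<in> B then {\<C> \<in> Pow \<A>. V \<notin> \<C>} else {})"
        using V unfolding chi_def topspace_K1 by (cases "True \<in> B"; cases "False \<in> B"; auto) (metis (full_types))+
      show "openin (K1 \<A>) {x \<in> topspace (K1 \<A>). chi x V \<in> B}"
        unfolding eq using K1_mem_open[OF V] K1_notmem_open[OF V] by auto
    qed
  qed
  have c2: "continuous_map PT (K1 \<A>) \<psi>"
    unfolding K1_def
  proof (rule continuous_on_generated_topo)
    fix U assume "U \<in> SB1 \<A>"
    then consider V where "V \<in> \<A>" "U = {\<C> \<in> Pow \<A>. V \<in> \<C>}" | V where "V \<in> \<A>" "U = {\<C> \<in> Pow \<A>. V \<notin> \<C>}"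
      | "U = Pow \<A>" unfolding SB1_def by blast
    then show "openin PT (\<psi> -` U \<inter> topspace PT)"
    proof cases
      case (1 V)
      have eq: "\<psi> -` U \<inter> topspace PT = {f \<in> topspace PT. f V \<in> {True}}" using 1 unfolding \<psi>_def by auto
      have "openin PT {f \<in> topspace PT. f V \<in> {True}}" unfolding PT_def
        by (rule openin_continuous_map_preimage[OF continuous_map_product_projection[OF 1(1)]]) simp
      then show ?thesis by (simp only: eq)
    next
      case (2 V)
      have eq: "\<psi> -` U \<inter> topspace PT = {f \<in> topspace PT. f V \<in> {False}}" using 2 unfolding \<psi>_def by auto
      have "openin PT {f \<in> topspace PT. f V \<in> {False}}" unfolding PT_def
        by (rule openin_continuous_map_preimage[OF continuous_map_product_projection[OF 2(1)]]) simp
      then show ?thesis by (simp only: eq)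
    next
      case 3
      then have "\<psi> -` U \<inter> topspace PT = topspace PT" unfolding \<psi>_def by auto
      then show ?thesis by simp
    qed
  next
    show "\<psi> ` topspace PT \<subseteq> \<Union> (SB1 \<A>)" unfolding \<psi>_def SB1_def by auto
  qed
  have "homeomorphic_maps (K1 \<A>) PT chi \<psi>"
    unfolding homeomorphic_maps_def
  proof (intro conjI c1 c2 ballI)
    fix x assume "x \<in> topspace (K1 \<A>)"
    then show "\<psi> (chi x) = x" unfolding topspace_K1 \<psi>_def chi_def by auto
  next
    fix y assume "y \<in> topspace PT"
    then show "chi (\<psi> y) = y" unfolding topPT \<psi>_def chi_def by (auto simp: PiE_def extensional_def fun_eq_iff)
  qed
  then have "K1 \<A> homeomorphic_space PT" unfolding homeomorphic_space_def by blast
  moreover have "compact_space PT"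
    unfolding PT_def compact_space_product_topology by (simp add: compact_space_discrete_topology)
  ultimately show ?thesis using homeomorphic_compact_space by blast
qed


locale SEF =
  fixes X :: "'a topology" and \<A> :: "'a set set" and FX :: "'b topology" and e :: "'a \<Rightarrow> 'b"
  assumes t0: "t0_space X"
    and clop: "\<forall>V\<in>\<A>. closedin X V \<and> openin X V"
    and spf: "strongly_point_finite \<A>"
    and sub: "subbase_of (\<A> \<union> {topspace X - V | V. V \<in> \<A>}) X"
    and fr: "freudenthal_compactification X FX e"
    and sc: "second_countable (subtopology FX (topspace FX - e ` topspace X))"
begin

definition SS where "SS = \<A> \<union> {topspace X - V | V. V \<in> \<A>}"
definition ee where "ee x = {V \<in> \<A>. x \<in> V}"
definition C0 where "C0 = (K1 \<A>) closure_of (ee ` topspace X)"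
definition K0 where "K0 = subtopology (K1 \<A>) C0"

lemma X_gen: "X = topology_generated_by SS"
  using sub unfolding subbase_of_def SS_def by auto

lemma SS_sub: "S \<in> SS \<Longrightarrow> S \<subseteq> topspace X"
  using sub unfolding subbase_of_def SS_def by auto

lemma A_sub: "V \<in> \<A> \<Longrightarrow> V \<subseteq> topspace X"
  using SS_sub unfolding SS_def by auto

lemma SS_open: "S \<in> SS \<Longrightarrow> openin X S"
  by (subst X_gen) (rule topology_generated_by_Basis)

lemma ee_Pow: "ee x \<in> Pow \<A>" unfolding ee_def by auto

lemma ee_cont: "continuous_map X (K1 \<A>) ee"
  unfolding K1_def
proof (rule continuous_on_generated_topo)
  fix U assume "U \<in> SB1 \<A>"
  then consider V where "V \<in> \<A>" "U = {\<C> \<in> Pow \<A>. V \<in> \<C>}" | V where "V \<in> \<A>" "U = {\<C> \<in> Pow \<A>. V \<notin> \<C>}"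
    | "U = Pow \<A>" unfolding SB1_def by blast
  then show "openin X (ee -` U \<inter> topspace X)"
  proof cases
    case (1 V)
    then have "ee -` U \<inter> topspace X = V" using A_sub[OF 1(1)] unfolding ee_def by auto
    then show ?thesis using clop 1 by simp
  next
    case (2 V)
    then have "ee -` U \<inter> topspace X = topspace X - V" unfolding ee_def by auto
    then show ?thesis using clop 2 by (simp add: closedin_def)
  next
    case 3 then have "ee -` U \<inter> topspace X = topspace X" using ee_Pow by auto
    then show ?thesis by simp
  qed
next
  show "ee ` topspace X \<subseteq> \<Union> (SB1 \<A>)" using ee_Pow unfolding SB1_def by auto
qed

lemma SS_same:
  assumes "ee x = ee y" "x \<in> topspace X" "y \<in> topspace X" "S \<in> SS"
  shows "x \<in> S \<longleftrightarrow> y \<in> S"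
proof -
  consider "S \<in> \<A>" | V where "V \<in> \<A>" "S = topspace X - V" using assms(4) unfolding SS_def by blast
  then show ?thesis
  proof cases
    case 1 then show ?thesis using assms(1) unfolding ee_def by blast
  next
    case (2 V)
    have "x \<in> V \<longleftrightarrow> y \<in> V" using assms(1) 2(1) unfolding ee_def by blast
    then show ?thesis using 2 assms by auto
  qed
qed

lemma open_same:
  assumes "ee x = ee y" "x \<in> topspace X" "y \<in> topspace X" "openin X U" "x \<in> U"
  shows "y \<in> U"
proof -
  obtain F where F: "finite F" "F \<noteq> {}" "F \<subseteq> SS" "x \<in> \<Inter>F" "\<Inter>F \<subseteq> U"
    using gen_local_base[of SS U x] assms(4,5) X_gen by auto
  have "y \<in> \<Inter>F" using F(3,4) SS_same[OF assms(1-3)] by blast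
  then show ?thesis using F(5) by blast
qed

lemma ee_inj: "inj_on ee (topspace X)"
proof (rule inj_onI, rule ccontr)
  fix x y assume xy: "x \<in> topspace X" "y \<in> topspace X" "ee x = ee y" "x \<noteq> y"
  then obtain U where U: "openin X U" "x \<notin> U \<longleftrightarrow> y \<in> U" using t0 unfolding t0_space_def by blast
  show False
  proof (cases "x \<in> U")
    case True then show False using open_same[OF xy(3,1,2) U(1)] U(2) by blast
  next
    case False then show False using open_same[OF xy(3)[symmetric] xy(2,1) U(1)] U(2) by blast
  qed
qed

lemma SS_image:
  assumes "S \<in> SS"
  shows "\<exists>B. openin (K1 \<A>) B \<and> ee ` S = B \<inter> ee ` topspace X"
proof -
  consider "S \<in> \<A>" | V where "V \<in> \<A>" "S = topspace X - V" using assms unfolding SS_def by blast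
  then show ?thesis
  proof cases
    case 1
    have "ee ` S = {\<C> \<in> Pow \<A>. S \<in> \<C>} \<inter> ee ` topspace X"
      using 1 A_sub[OF 1] ee_Pow unfolding ee_def by auto
    then show ?thesis using K1_mem_open[OF 1] by blast
  next
    case (2 V)
    have "ee ` S = {\<C> \<in> Pow \<A>. V \<notin> \<C>} \<inter> ee ` topspace X"
      using 2 ee_Pow unfolding ee_def by auto
    then show ?thesis using K1_notmem_open[OF 2(1)] by blast
  qed
qed

lemma ee_open:
  assumes "openin X U"
  shows "\<exists>W. openin (K1 \<A>) W \<and> ee ` U = W \<inter> ee ` topspace X"
proof -
  obtain \<beta> where \<beta>: "\<And>S. S \<in> SS \<Longrightarrow> openin (K1 \<A>) (\<beta> S) \<and> ee ` S = \<beta> S \<inter> ee ` topspace X"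
    using SS_image by metis
  have "\<forall>x\<in>U. \<exists>F. finite F \<and> F \<noteq> {} \<and> F \<subseteq> SS \<and> x \<in> \<Inter>F \<and> \<Inter>F \<subseteq> U"
    using gen_local_base[of SS U] assms X_gen by auto
  then obtain \<F> where \<F>: "\<And>x. x \<in> U \<Longrightarrow> finite (\<F> x) \<and> \<F> x \<noteq> {} \<and> \<F> x \<subseteq> SS \<and> x \<in> \<Inter>(\<F> x) \<and> \<Inter>(\<F> x) \<subseteq> U"
    by metis
  define W where "W = (\<Union>x\<in>U. \<Inter>(\<beta> ` \<F> x))"
  have op: "openin (K1 \<A>) (\<Inter>(\<beta> ` \<F> x))" if "x \<in> U" for x
    using \<F>[OF that] \<beta> by (intro openin_Inter) auto
  have "openin (K1 \<A>) W" unfolding W_def using op by (intro openin_Union) auto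
  moreover have "ee ` U = W \<inter> ee ` topspace X"
  proof
    have Usub: "U \<subseteq> topspace X" using assms by (rule openin_subset)
    show "ee ` U \<subseteq> W \<inter> ee ` topspace X"
    proof
      fix c assume "c \<in> ee ` U"
      then obtain x where x: "x \<in> U" "c = ee x" by blast
      have "c \<in> \<beta> S" if "S \<in> \<F> x" for S
      proof -
        have "x \<in> S" using \<F>[OF x(1)] that by blast
        then have "c \<in> ee ` S" using x by blast
        then show ?thesis using \<beta>[of S] \<F>[OF x(1)] that by blast
      qed
      then show "c \<in> W \<inter> ee ` topspace X" using x Usub unfolding W_def by blast
    qed
    show "W \<inter> ee ` topspace X \<subseteq> ee ` U"
    proof
      fix c assume c: "c \<in> W \<inter> ee ` topspace X"
      then obtain x z where xz: "x \<in> U" "c \<in> \<Inter>(\<beta> ` \<F> x)" "z \<in> topspace X" "c = ee z"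
        unfolding W_def by blast
      have "z \<in> S" if S: "S \<in> \<F> x" for S
      proof -
        have SS: "S \<in> SS" using \<F>[OF xz(1)] S by blast
        have "c \<in> ee ` S" using \<beta>[OF SS] xz S by blast
        then obtain w where "w \<in> S" "c = ee w" by blast
        moreover have "w \<in> topspace X" using SS_sub[OF SS] \<open>w \<in> S\<close> by blast
        ultimately show "z \<in> S" using ee_inj xz(3,4) by (metis inj_on_def)
      qed
      then have "z \<in> U" using \<F>[OF xz(1)] by blast
      then show "c \<in> ee ` U" using xz by blast
    qed
  qed
  ultimately show ?thesis by blast
qed

lemma eeX_C0: "ee ` topspace X \<subseteq> C0"
  unfolding C0_def by (rule closure_of_subset) (use ee_Pow in \<open>auto simp: topspace_K1\<close>)

lemma topspace_K0: "topspace K0 = C0"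
  unfolding K0_def C0_def by (metis closure_of_subset_topspace inf.absorb2 topspace_subtopology)

lemma K0_compact: "compact_space K0"
  unfolding K0_def C0_def
  by (rule compact_space_subtopology, rule closedin_compact_space[OF K1_compact]) simp

lemma K0_Hausdorff: "Hausdorff_space K0"
  unfolding K0_def by (rule Hausdorff_space_subtopology[OF K1_Hausdorff])

lemma ee_embedding: "embedding_map X K0 ee"
  unfolding embedding_map_def
proof (rule bijective_open_imp_homeomorphic_map)
  show "continuous_map X (subtopology K0 (ee ` topspace X)) ee"
    unfolding K0_def continuous_map_in_subtopology using ee_cont eeX_C0 by auto
  show "open_map X (subtopology K0 (ee ` topspace X)) ee"
    unfolding open_map_def K0_def subtopology_subtopology
  proof (intro allI impI)
    fix U assume "openin X U"
    then obtain W where "openin (K1 \<A>) W" "ee ` U = W \<inter> ee ` topspace X" using ee_open by blast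
    moreover have "C0 \<inter> ee ` topspace X = ee ` topspace X" using eeX_C0 by blast
    ultimately show "openin (subtopology (K1 \<A>) (C0 \<inter> ee ` topspace X)) (ee ` U)"
      by (auto simp: openin_subtopology)
  qed
  show "ee ` topspace X = topspace (subtopology K0 (ee ` topspace X))"
    using eeX_C0 topspace_K0 by auto
  show "inj_on ee (topspace X)" by (rule ee_inj)
qed

lemma K0_dense: "K0 closure_of (ee ` topspace X) = topspace K0"
  unfolding K0_def topspace_K0[unfolded K0_def]
  using closure_of_subtopology_open[of "K1 \<A>" C0 "ee ` topspace X"] eeX_C0 unfolding C0_def
  by auto

lemma K0_clopen_base:
  assumes "openin K0 U" "y \<in> U"
  shows "\<exists>V. openin K0 V \<and> closedin K0 V \<and> y \<in> V \<and> V \<subseteq> U"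
proof -
  obtain U' where U': "openin (K1 \<A>) U'" "U = U' \<inter> C0" using assms(1) unfolding K0_def openin_subtopology by blast
  then obtain W where W: "openin (K1 \<A>) W" "closedin (K1 \<A>) W" "y \<in> W" "W \<subseteq> U'"
    using K1_local_clopen[of \<A> U' y] assms(2) by blast
  have "openin K0 (W \<inter> C0)" unfolding K0_def openin_subtopology using W by blast
  moreover have "closedin K0 (W \<inter> C0)" unfolding K0_def closedin_subtopology using W by blast
  ultimately show ?thesis using W U' assms(2) by blast
qed

lemma K0_zd: "zd_compactification X K0 ee"
  unfolding zd_compactification_def hausdorff_compactification_def zero_dim_embedded_def
proof (intro conjI K0_compact K0_Hausdorff ee_embedding K0_dense ballI allI impI)
  fix y U assume "y \<in> topspace K0 - ee ` topspace X" "openin K0 U \<and> y \<in> U"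
  then obtain V where V: "openin K0 V" "closedin K0 V" "y \<in> V" "V \<subseteq> U"
    using K0_clopen_base by blast
  have "K0 frontier_of V = {}" using V by (simp add: frontier_of_eq_empty openin_subset)
  then show "\<exists>V. openin K0 V \<and> y \<in> V \<and> V \<subseteq> U \<and> K0 frontier_of V \<inter> (topspace K0 - ee ` topspace X) = {}"
    using V by blast
qed

end


context SEF begin

lemma FX_props:
  "compact_space FX" "Hausdorff_space FX" "embedding_map X FX e"
  "FX closure_of (e ` topspace X) = topspace FX"
  using fr unfolding freudenthal_compactification_def zd_compactification_def
    hausdorff_compactification_def by auto

lemma e_cont: "continuous_map X FX e"
proof -
  have "continuous_map X (subtopology FX (e ` topspace X)) e"
    using FX_props(3) unfolding embedding_map_def by (rule homeomorphic_imp_continuous_map)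
  then show ?thesis by (simp add: continuous_map_in_subtopology)
qed

lemma e_inj: "inj_on e (topspace X)"
  using FX_props(3) unfolding embedding_map_def homeomorphic_map_def by auto

definition gg where "gg = (SOME g. continuous_map FX K0 g \<and> (\<forall>x. g (e x) = ee x))"

lemma gg: "continuous_map FX K0 gg" "\<And>x. gg (e x) = ee x"
proof -
  have "compactification_ge FX e K0 ee"
    using fr K0_zd unfolding freudenthal_compactification_def by blast
  then have "\<exists>g. continuous_map FX K0 g \<and> (\<forall>x. g (e x) = ee x)"
    unfolding compactification_ge_def by blast
  then have "continuous_map FX K0 gg \<and> (\<forall>x. gg (e x) = ee x)"
    unfolding gg_def by (rule someI_ex)
  then show "continuous_map FX K0 gg" "\<And>x. gg (e x) = ee x" by auto
qed

lemma gg_C0: "p \<in> topspace FX \<Longrightarrow> gg p \<in> C0"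
  using gg(1) topspace_K0 unfolding continuous_map_def by auto

lemma C0_sub: "y \<in> C0 \<Longrightarrow> y \<subseteq> \<A>"
  using closure_of_subset_topspace[of "K1 \<A>" "ee ` topspace X"] unfolding C0_def topspace_K1 by auto

lemma C0_centered:
  assumes y: "y \<in> C0" and F: "finite F" "F \<noteq> {}" "F \<subseteq> y"
  shows "\<exists>x\<in>topspace X. F \<subseteq> ee x"
proof -
  define T where "T = \<Inter>((\<lambda>V. {\<C> \<in> Pow \<A>. V \<in> \<C>}) ` F)"
  have FA: "F \<subseteq> \<A>" using C0_sub[OF y] F by auto
  have "openin (K1 \<A>) T" unfolding T_def
  proof (rule openin_Inter)
    show "finite ((\<lambda>V. {\<C> \<in> Pow \<A>. V \<in> \<C>}) ` F)" using F by simp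
    show "(\<lambda>V. {\<C> \<in> Pow \<A>. V \<in> \<C>}) ` F \<noteq> {}" using F by simp
    fix S assume "S \<in> (\<lambda>V. {\<C> \<in> Pow \<A>. V \<in> \<C>}) ` F"
    then show "openin (K1 \<A>) S" using FA K1_mem_open by blast
  qed
  moreover have "y \<in> T" unfolding T_def using F C0_sub[OF y] by auto
  ultimately obtain z where "z \<in> ee ` topspace X" "z \<in> T"
    using y unfolding C0_def in_closure_of by blast
  then show ?thesis unfolding T_def using F by auto
qed

lemma C0_finite: "y \<in> C0 \<Longrightarrow> finite y"
proof (rule ccontr)
  assume y: "y \<in> C0" "infinite y"
  then obtain \<B> where B: "\<B> \<subseteq> y" "countable \<B>" "infinite \<B>" using infinite_countable_subset' by blast
  then have BA: "\<B> \<subseteq> \<A>" using C0_sub[OF y(1)] by auto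
  have "\<exists>\<C>\<subseteq>\<B>. finite \<C> \<and> \<C> \<noteq> {} \<and> \<Inter>\<C> = {}"
    using spf BA B(2,3) unfolding strongly_point_finite_def by blast
  then obtain \<C> where C: "\<C> \<subseteq> \<B>" "finite \<C>" "\<C> \<noteq> {}" "\<Inter>\<C> = {}" by blast
  then obtain x where "x \<in> topspace X" "\<C> \<subseteq> ee x" using C0_centered[OF y(1), of \<C>] B by auto
  then have "x \<in> \<Inter>\<C>" unfolding ee_def by auto
  then show False using C by auto
qed

lemma C0_nonempty: "y \<in> C0 \<Longrightarrow> V \<in> y \<Longrightarrow> V \<noteq> {}"
  using C0_centered[of y "{V}"] unfolding ee_def by auto

lemma point_finite: "finite {V \<in> \<A>. x \<in> V}"
proof (rule ccontr)
  assume inf: "infinite {V \<in> \<A>. x \<in> V}"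
  then obtain \<B> where B: "\<B> \<subseteq> {V \<in> \<A>. x \<in> V}" "countable \<B>" "infinite \<B>"
    using infinite_countable_subset' by blast
  have BA: "\<B> \<subseteq> \<A>" using B(1) by auto
  have "\<exists>\<C>\<subseteq>\<B>. finite \<C> \<and> \<C> \<noteq> {} \<and> \<Inter>\<C> = {}"
    using spf BA B(2,3) unfolding strongly_point_finite_def by blast
  then obtain \<C> where C: "\<C> \<subseteq> \<B>" "finite \<C>" "\<C> \<noteq> {}" "\<Inter>\<C> = {}" by blast
  then have "x \<in> \<Inter>\<C>" using B by auto
  then show False using C by auto
qed

lemma remainder:
  assumes p: "p \<in> topspace FX" and gp: "gg p \<in> ee ` topspace X"
  shows "p \<in> e ` topspace X"
proof (rule ccontr)
  assume np: "p \<notin> e ` topspace X"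
  obtain x where x: "x \<in> topspace X" "gg p = ee x" using gp by blast
  have ex: "e x \<in> topspace FX" using e_cont x(1) unfolding continuous_map_def by auto
  have "p \<noteq> e x" using np x by auto
  then obtain U W where UW: "openin FX U" "openin FX W" "p \<in> U" "e x \<in> W" "disjnt U W"
    using FX_props(2) p ex unfolding Hausdorff_space_def by blast
  define N where "N = {z \<in> topspace X. e z \<in> W}"
  have N: "openin X N" unfolding N_def using e_cont UW(2) by (rule openin_continuous_map_preimage)
  have xN: "x \<in> N" unfolding N_def using x UW by auto
  have "openin (subtopology K0 (ee ` topspace X)) (ee ` N)"
    using ee_embedding N unfolding embedding_map_def by (simp add: homeomorphic_map_openness_eq)
  then obtain Ob where Ob: "openin K0 Ob" "ee ` N = Ob \<inter> ee ` topspace X"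
    unfolding openin_subtopology by blast
  define G where "G = {q \<in> topspace FX. gg q \<in> Ob}"
  have G: "openin FX G" unfolding G_def using gg(1) Ob(1) by (rule openin_continuous_map_preimage)
  have "ee x \<in> Ob" using Ob xN by blast
  then have pG: "p \<in> G" unfolding G_def using p x by auto
  have "p \<in> FX closure_of (e ` topspace X)" using FX_props(4) p by simp
  then obtain z where z: "z \<in> e ` topspace X" "z \<in> U \<inter> G"
    using UW(1) G UW(3) pG unfolding in_closure_of by (meson IntI openin_Int)
  then obtain y where y: "y \<in> topspace X" "z = e y" by blast
  have "ee y \<in> Ob" using z y gg(2) unfolding G_def by auto
  then have "ee y \<in> ee ` N" using Ob y by blast
  then obtain n where n: "n \<in> N" "ee y = ee n" by blast
  then have "y = n" using ee_inj y(1) unfolding N_def by (auto simp: inj_on_def)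
  then have "z \<in> W" using n y unfolding N_def by auto
  then show False using z UW(5) by (auto simp: disjnt_def)
qed

end


context SEF begin

definition RR where "RR = topspace FX - e ` topspace X"

lemma FX_normal: "normal_space FX"
  using FX_props(1,2) by (simp add: compact_Hausdorff_or_regular_imp_normal_space)

lemma FX_regular: "regular_space FX"
  using FX_props(1,2) by (rule compact_Hausdorff_imp_regular_space)

lemma small_closure:
  assumes "openin FX U0" "p \<in> U0"
  shows "\<exists>U. openin FX U \<and> p \<in> U \<and> FX closure_of U \<subseteq> U0"
proof -
  have "closedin FX (topspace FX - U0)" using assms(1) by auto
  moreover have "p \<in> topspace FX - (topspace FX - U0)" using assms openin_subset by fastforce
  ultimately obtain U where U: "openin FX U" "p \<in> U" "disjnt (topspace FX - U0) (FX closure_of U)"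
    using FX_regular unfolding regular_space by blast
  then have "FX closure_of U \<subseteq> U0"
    using closure_of_subset_topspace[of FX U] by (auto simp: disjnt_def)
  then show ?thesis using U by blast
qed

definition BB where "BB = (SOME \<B>. countable \<B> \<and> (\<forall>V \<in> \<B>. openin (subtopology FX RR) V) \<and>
             (\<forall>U x. openin (subtopology FX RR) U \<and> x \<in> U \<longrightarrow> (\<exists>V \<in> \<B>. x \<in> V \<and> V \<subseteq> U)))"

lemma BB: "countable BB" "\<And>U x. openin (subtopology FX RR) U \<Longrightarrow> x \<in> U \<Longrightarrow> \<exists>V \<in> BB. x \<in> V \<and> V \<subseteq> U"
proof -
  have "\<exists>\<B>. countable \<B> \<and> (\<forall>V \<in> \<B>. openin (subtopology FX RR) V) \<and>
             (\<forall>U x. openin (subtopology FX RR) U \<and> x \<in> U \<longrightarrow> (\<exists>V \<in> \<B>. x \<in> V \<and> V \<subseteq> U))"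
    using sc unfolding second_countable_def RR_def by blast
  then have "countable BB \<and> (\<forall>V \<in> BB. openin (subtopology FX RR) V) \<and>
             (\<forall>U x. openin (subtopology FX RR) U \<and> x \<in> U \<longrightarrow> (\<exists>V \<in> BB. x \<in> V \<and> V \<subseteq> U))"
    unfolding BB_def by (rule someI_ex)
  then show "countable BB" "\<And>U x. openin (subtopology FX RR) U \<Longrightarrow> x \<in> U \<Longrightarrow> \<exists>V \<in> BB. x \<in> V \<and> V \<subseteq> U"
    by auto
qed

definition PP where "PP = {(B1, B2). B1 \<in> BB \<and> B2 \<in> BB \<and> disjnt (FX closure_of B1) (FX closure_of B2)}"

lemma PP_countable: "countable PP"
proof -
  have "PP \<subseteq> BB \<times> BB" unfolding PP_def by auto
  moreover have "countable (BB \<times> BB)" using BB(1) by simp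
  ultimately show ?thesis by (rule countable_subset)
qed

definition uu where "uu B = (SOME f. continuous_map FX (top_of_set {0..1::real}) f \<and>
   f ` (FX closure_of (fst B)) \<subseteq> {0} \<and> f ` (FX closure_of (snd B)) \<subseteq> {1})"

lemma uu:
  assumes "B \<in> PP"
  shows "continuous_map FX (top_of_set {0..1::real}) (uu B)"
    "uu B ` (FX closure_of (fst B)) \<subseteq> {0}" "uu B ` (FX closure_of (snd B)) \<subseteq> {1}"
proof -
  have "disjnt (FX closure_of (fst B)) (FX closure_of (snd B))" using assms unfolding PP_def by auto
  then obtain f where "continuous_map FX (top_of_set {0..1::real}) f"
     "f ` (FX closure_of (fst B)) \<subseteq> {0}" "f ` (FX closure_of (snd B)) \<subseteq> {1}"
    using Urysohn_lemma[OF FX_normal closedin_closure_of closedin_closure_of, of "fst B" "snd B" 0 1] by auto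
  then have "continuous_map FX (top_of_set {0..1::real}) f \<and>
   f ` (FX closure_of (fst B)) \<subseteq> {0} \<and> f ` (FX closure_of (snd B)) \<subseteq> {1}" by blast
  then have "continuous_map FX (top_of_set {0..1::real}) (uu B) \<and>
   uu B ` (FX closure_of (fst B)) \<subseteq> {0} \<and> uu B ` (FX closure_of (snd B)) \<subseteq> {1}"
    unfolding uu_def by (rule someI[where P = "\<lambda>f. continuous_map FX (top_of_set {0..1::real}) f \<and>
   f ` (FX closure_of (fst B)) \<subseteq> {0} \<and> f ` (FX closure_of (snd B)) \<subseteq> {1}"])
  then show "continuous_map FX (top_of_set {0..1::real}) (uu B)"
    "uu B ` (FX closure_of (fst B)) \<subseteq> {0}" "uu B ` (FX closure_of (snd B)) \<subseteq> {1}" by auto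
qed

definition hh where "hh n = (if PP = {} then (\<lambda>_. 0) else uu (from_nat_into PP n))"

lemma hh_cont: "continuous_map FX euclideanreal (hh n)"
proof (cases "PP = {}")
  case True then show ?thesis unfolding hh_def by simp
next
  case False
  then have "from_nat_into PP n \<in> PP" by (rule from_nat_into)
  then show ?thesis using uu(1) unfolding hh_def using False by (simp add: continuous_map_in_subtopology)
qed

lemma hh_range: "p \<in> topspace FX \<Longrightarrow> 0 \<le> hh n p \<and> hh n p \<le> 1"
proof (cases "PP = {}")
  case True then show ?thesis unfolding hh_def by simp
next
  case False
  assume p: "p \<in> topspace FX"
  from False have mem: "from_nat_into PP n \<in> PP" by (rule from_nat_into)
  have "uu (from_nat_into PP n) p \<in> {0..1}"
    using uu(1)[OF mem] p unfolding continuous_map_def by (auto simp del: prod.collapse)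
  then show ?thesis unfolding hh_def using False by auto
qed

lemma hh_sep:
  assumes p: "p \<in> RR" and q: "q \<in> RR" and pq: "p \<noteq> q"
  shows "\<exists>n. hh n p \<noteq> hh n q"
proof -
  have pF: "p \<in> topspace FX" and qF: "q \<in> topspace FX" using p q unfolding RR_def by auto
  obtain U0 W0 where UW: "openin FX U0" "openin FX W0" "p \<in> U0" "q \<in> W0" "disjnt U0 W0"
    using FX_props(2) pF qF pq unfolding Hausdorff_space_def by blast
  obtain U where U: "openin FX U" "p \<in> U" "FX closure_of U \<subseteq> U0" using small_closure UW by blast
  obtain W where W: "openin FX W" "q \<in> W" "FX closure_of W \<subseteq> W0" using small_closure UW by blast
  obtain B1 where B1: "B1 \<in> BB" "p \<in> B1" "B1 \<subseteq> U \<inter> RR"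
    using BB(2)[of "U \<inter> RR" p] U p openin_subtopology_Int[OF U(1)] by blast
  obtain B2 where B2: "B2 \<in> BB" "q \<in> B2" "B2 \<subseteq> W \<inter> RR"
    using BB(2)[of "W \<inter> RR" q] W q openin_subtopology_Int[OF W(1)] by blast
  have c1: "FX closure_of B1 \<subseteq> U0" using closure_of_mono[of B1 U FX] B1 U by auto
  have c2: "FX closure_of B2 \<subseteq> W0" using closure_of_mono[of B2 W FX] B2 W by auto
  have "disjnt (FX closure_of B1) (FX closure_of B2)" using c1 c2 UW(5) unfolding disjnt_def by blast
  then have "(B1, B2) \<in> PP" unfolding PP_def using B1(1) B2(1) by simp
  then obtain n where n: "from_nat_into PP n = (B1, B2)" using from_nat_into_surj[OF PP_countable] by blast
  have ne: "PP \<noteq> {}" using \<open>(B1, B2) \<in> PP\<close> by auto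
  have "p \<in> FX closure_of B1" using B1 pF by (meson closure_of_subset_Int IntI subsetD)
  then have "uu (B1, B2) p = 0" using uu(2)[OF \<open>(B1, B2) \<in> PP\<close>] by auto
  then have "hh n p = 0" unfolding hh_def using ne n by simp
  moreover have "q \<in> FX closure_of B2" using B2 qF by (meson closure_of_subset_Int IntI subsetD)
  then have "uu (B1, B2) q = 1" using uu(3)[OF \<open>(B1, B2) \<in> PP\<close>] by auto
  then have "hh n q = 1" unfolding hh_def using ne n by simp
  ultimately show ?thesis by (intro exI[of _ n]) simp
qed

end


unbundle cardinal_syntax

lemma finite_small_nat: "finite {n::nat. \<epsilon> \<le> inverse (real (Suc n))}" if "\<epsilon> > 0" for \<epsilon> :: real
proof -
  have "{n::nat. \<epsilon> \<le> inverse (real (Suc n))} \<subseteq> {..nat \<lceil>1/\<epsilon>\<rceil>}"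
  proof
    fix n assume "n \<in> {n::nat. \<epsilon> \<le> inverse (real (Suc n))}"
    then have "\<epsilon> * real (Suc n) \<le> 1" using that by (simp add: field_simps)
    then have "real (Suc n) \<le> 1/\<epsilon>" using that by (simp add: field_simps)
    then have "real n \<le> real (nat \<lceil>1/\<epsilon>\<rceil>)" using real_nat_ceiling_ge[of "1/\<epsilon>"] by linarith
    then show "n \<in> {..nat \<lceil>1/\<epsilon>\<rceil>}" by simp
  qed
  then show ?thesis by (rule finite_subset) simp
qed

context SEF begin

definition cc :: "('a set + nat) \<Rightarrow> 'b \<Rightarrow> real" where
  "cc \<gamma> p = (case \<gamma> of Inl V \<Rightarrow> (if V \<in> gg p then 1 else 0) | Inr n \<Rightarrow> inverse (real (Suc n)) * hh n p)"

definition GG where "GG = {V \<in> \<A>. V \<noteq> {}} <+> (UNIV :: nat set)"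

lemma cc_cont: "continuous_map FX euclideanreal (cc \<gamma>)"
proof (cases \<gamma>)
  case (Inl V)
  define S where "S = {\<C> \<in> C0. V \<in> \<C>}"
  have S: "openin K0 S \<and> closedin K0 S"
  proof (cases "V \<in> \<A>")
    case True
    have "S = {\<C> \<in> Pow \<A>. V \<in> \<C>} \<inter> C0" unfolding S_def using C0_sub by auto
    moreover have "closedin (K1 \<A>) {\<C> \<in> Pow \<A>. V \<in> \<C>}" using True by (intro K1_basic_closed) (auto simp: SB1_def)
    ultimately show ?thesis using K1_mem_open[OF True] unfolding K0_def openin_subtopology closedin_subtopology by blast
  next
    case False
    then have "S = {}" unfolding S_def using C0_sub by auto
    then show ?thesis by simp
  qed
  have "continuous_map FX euclideanreal ((\<lambda>x. if x \<in> S then 1 else (0::real)) \<circ> gg)"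
    using continuous_map_compose[OF gg(1) clopen_indicator_continuous] S by blast
  then show ?thesis
    by (rule continuous_map_eq) (use gg_C0 in \<open>auto simp: Inl cc_def S_def\<close>)
next
  case (Inr n)
  show ?thesis unfolding Inr cc_def by (simp add: continuous_map_real_mult_left hh_cont)
qed

lemma cc_bd: "p \<in> topspace FX \<Longrightarrow> \<bar>cc \<gamma> p\<bar> \<le> 1"
proof (cases \<gamma>)
  case (Inl V) then show ?thesis by (simp add: cc_def)
next
  case (Inr n)
  assume p: "p \<in> topspace FX"
  have "0 \<le> hh n p" "hh n p \<le> 1" using hh_range[OF p] by auto
  moreover have "0 < inverse (real (Suc n))" by auto
  moreover have "inverse (real (Suc n)) \<le> 1" using le_imp_inverse_le[of 1 "real (Suc n)"] by simp
  ultimately have "0 \<le> inverse (real (Suc n)) * hh n p" "inverse (real (Suc n)) * hh n p \<le> 1"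
    by (auto intro: mult_le_one)
  then show ?thesis by (simp add: Inr cc_def)
qed

lemma cc_fin:
  assumes p: "p \<in> topspace FX" and e: "\<epsilon> > 0"
  shows "finite {\<gamma> \<in> GG. \<epsilon> \<le> \<bar>cc \<gamma> p\<bar>}"
proof -
  have "{\<gamma> \<in> GG. \<epsilon> \<le> \<bar>cc \<gamma> p\<bar>} \<subseteq> Inl ` gg p \<union> Inr ` {n::nat. \<epsilon> \<le> inverse (real (Suc n))}"
  proof
    fix \<gamma> assume g: "\<gamma> \<in> {\<gamma> \<in> GG. \<epsilon> \<le> \<bar>cc \<gamma> p\<bar>}"
    show "\<gamma> \<in> Inl ` gg p \<union> Inr ` {n::nat. \<epsilon> \<le> inverse (real (Suc n))}"
    proof (cases \<gamma>)
      case (Inl V)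
      then have "V \<in> gg p" using g e by (auto simp: cc_def split: if_splits)
      then show ?thesis using Inl by auto
    next
      case (Inr n)
      have "0 \<le> hh n p" "hh n p \<le> 1" using hh_range[OF p] by auto
      then have "inverse (real (Suc n)) * hh n p \<le> inverse (real (Suc n))"
        by (simp add: mult_left_le)
      moreover have "\<bar>inverse (real (Suc n)) * hh n p\<bar> = inverse (real (Suc n)) * hh n p"
        using \<open>0 \<le> hh n p\<close> by simp
      moreover have "\<epsilon> \<le> \<bar>cc \<gamma> p\<bar>" using g by simp
      moreover have "cc \<gamma> p = inverse (real (Suc n)) * hh n p" by (simp add: Inr cc_def)
      ultimately have "\<epsilon> \<le> inverse (real (Suc n))" by linarith
      then show ?thesis using Inr by auto
    qed
  qed
  moreover have "finite (Inl ` gg p \<union> Inr ` {n::nat. \<epsilon> \<le> inverse (real (Suc n))})"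
    using C0_finite[OF gg_C0[OF p]] finite_small_nat[OF e] by simp
  ultimately show ?thesis by (rule finite_subset)
qed

lemma cc_sep:
  assumes p: "p \<in> topspace FX" and q: "q \<in> topspace FX" and pq: "p \<noteq> q"
  shows "\<exists>\<gamma>\<in>GG. cc \<gamma> p \<noteq> cc \<gamma> q"
proof (cases "gg p = gg q")
  case False
  then obtain V where V: "(V \<in> gg p \<and> V \<notin> gg q) \<or> (V \<notin> gg p \<and> V \<in> gg q)" by blast
  then have "V \<in> \<A>" "V \<noteq> {}" using C0_sub C0_nonempty gg_C0 p q by blast+
  then have "Inl V \<in> GG" unfolding GG_def by auto
  moreover have "cc (Inl V) p \<noteq> cc (Inl V) q" using V by (auto simp: cc_def)
  ultimately show ?thesis by blast
next
  case True
  show ?thesis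
  proof (cases "p \<in> e ` topspace X")
    case pX: True
    then obtain x where x: "x \<in> topspace X" "p = e x" by blast
    have "gg q \<in> ee ` topspace X" using True x gg(2) by auto
    then have "q \<in> e ` topspace X" using remainder q by blast
    then obtain y where y: "y \<in> topspace X" "q = e y" by blast
    have "ee x = ee y" using True x y gg(2) by metis
    then have "x = y" using ee_inj x y by (auto simp: inj_on_def)
    then show ?thesis using pq x y by simp
  next
    case pR: False
    show ?thesis
    proof (cases "q \<in> e ` topspace X")
      case True
      then obtain y where y: "y \<in> topspace X" "q = e y" by blast
      have "gg p \<in> ee ` topspace X" using \<open>gg p = gg q\<close> y gg(2) by auto
      then have "p \<in> e ` topspace X" using remainder p by blast
      then show ?thesis using pR by blast
    next
      case False
      have "p \<in> RR" "q \<in> RR" using p q pR False unfolding RR_def by auto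
      then obtain n where n: "hh n p \<noteq> hh n q" using hh_sep pq by blast
      have "Inr n \<in> GG" unfolding GG_def by auto
      moreover have "cc (Inr n) p \<noteq> cc (Inr n) q" using n by (simp add: cc_def)
      ultimately show ?thesis by blast
    qed
  qed
qed

lemma GG_card:
  assumes inf: "infinite (topspace FX)"
  shows "\<exists>\<iota>. inj_on \<iota> GG \<and> \<iota> ` GG \<subseteq> topspace FX"
proof -
  let ?T = "topspace FX"
  have XT: "|topspace X| \<le>o |?T|"
    by (rule card_of_ordLeqI[of e]) (use e_inj e_cont in \<open>auto simp: continuous_map_def\<close>)
  have fibres: "\<forall>x\<in>topspace X. |{V \<in> \<A>. x \<in> V}| \<le>o |?T|"
  proof
    fix x
    have "countable {V \<in> \<A>. x \<in> V}" using point_finite by (rule countable_finite)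
    then have "|{V \<in> \<A>. x \<in> V}| \<le>o |UNIV :: nat set|" by (simp add: countable_card_of_nat)
    moreover have "|UNIV :: nat set| \<le>o |?T|" using inf by (simp add: infinite_iff_card_of_nat)
    ultimately show "|{V \<in> \<A>. x \<in> V}| \<le>o |?T|" by (rule ordLeq_transitive)
  qed
  have "|\<Union>x\<in>topspace X. {V \<in> \<A>. x \<in> V}| \<le>o |?T|"
    using card_of_UNION_ordLeq_infinite[OF inf XT fibres] .
  moreover have "{V \<in> \<A>. V \<noteq> {}} \<subseteq> (\<Union>x\<in>topspace X. {V \<in> \<A>. x \<in> V})"
    using A_sub by blast
  ultimately have A1: "|{V \<in> \<A>. V \<noteq> {}}| \<le>o |?T|" using card_of_mono1 ordLeq_transitive by blast
  have A2: "|UNIV :: nat set| \<le>o |?T|" using inf by (simp add: infinite_iff_card_of_nat)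
  have "|GG| \<le>o |?T|" unfolding GG_def
    by (rule card_of_Plus_ordLeq_infinite_Field[OF _ A1 A2 card_of_Card_order]) (simp add: Field_card_of inf)
  then show ?thesis unfolding card_of_ordLeq[symmetric] by blast
qed

lemma FX_eberlein: "eberlein_compact FX"
proof (cases "finite (topspace FX)")
  case True
  have disc: "FX = discrete_topology (topspace FX)"
    using finite_topspace_imp_discrete_topology[OF refl True FX_props(2)] by simp
  show ?thesis
  proof (rule eberlein_criterion[where I = "topspace FX" and c = "\<lambda>t p. if p = t then 1 else 0"])
    show "compact_space FX" "Hausdorff_space FX" using FX_props by auto
    fix t assume "t \<in> topspace FX"
    show "continuous_map FX euclideanreal (\<lambda>p. if p = t then 1 else 0)"
      by (subst disc) simp
  next
    fix p and \<epsilon> :: real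
    show "finite {t \<in> topspace FX. \<epsilon> \<le> \<bar>if p = t then 1 else 0\<bar>}" using True by simp
  qed auto
next
  case False
  then obtain \<iota> where \<iota>: "inj_on \<iota> GG" "\<iota> ` GG \<subseteq> topspace FX" using GG_card by blast
  define c where "c t = cc (the_inv_into GG \<iota> t)" for t
  have cinv: "c (\<iota> \<gamma>) = cc \<gamma>" if "\<gamma> \<in> GG" for \<gamma>
    unfolding c_def using the_inv_into_f_f[OF \<iota>(1) that] by simp
  show ?thesis
  proof (rule eberlein_criterion[where I = "\<iota> ` GG" and c = c])
    show "compact_space FX" "Hausdorff_space FX" using FX_props by auto
  next
    fix t assume "t \<in> \<iota> ` GG"
    then obtain \<gamma> where "\<gamma> \<in> GG" "t = \<iota> \<gamma>" by blast
    then show "continuous_map FX euclideanreal (c t)" using cinv cc_cont by simp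
  next
    fix t p assume "t \<in> \<iota> ` GG" "p \<in> topspace FX"
    then obtain \<gamma> where "\<gamma> \<in> GG" "t = \<iota> \<gamma>" by blast
    then show "\<bar>c t p\<bar> \<le> 1" using cinv cc_bd \<open>p \<in> topspace FX\<close> by simp
  next
    fix p and \<epsilon> :: real assume p: "p \<in> topspace FX" and e: "\<epsilon> > 0"
    have "{t \<in> \<iota> ` GG. \<epsilon> \<le> \<bar>c t p\<bar>} = \<iota> ` {\<gamma> \<in> GG. \<epsilon> \<le> \<bar>cc \<gamma> p\<bar>}"
      using cinv by force
    then show "finite {t \<in> \<iota> ` GG. \<epsilon> \<le> \<bar>c t p\<bar>}" using cc_fin[OF p e] by simp
  next
    fix p q assume "p \<in> topspace FX" "q \<in> topspace FX" "p \<noteq> q"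
    then obtain \<gamma> where "\<gamma> \<in> GG" "cc \<gamma> p \<noteq> cc \<gamma> q" using cc_sep by blast
    then show "\<exists>t\<in>\<iota> ` GG. c t p \<noteq> c t q" using cinv by force
  qed
qed

end

theorem corollary4p16:
  fixes X :: "'a topology" and FX :: "'b topology" and e :: "'a \<Rightarrow> 'b"
  assumes "SE_space X"
    and "freudenthal_compactification X FX e"
    and "second_countable (subtopology FX (topspace FX - e ` topspace X))"
  shows "eberlein_compact FX"
proof -
  obtain \<A> where A: "\<forall>V \<in> \<A>. closedin X V \<and> openin X V" "strongly_point_finite \<A>"
    "subbase_of (\<A> \<union> {topspace X - V | V. V \<in> \<A>}) X"
    using assms(1) unfolding SE_space_def by blast
  interpret SEF X \<A> FX e
    using assms A unfolding SE_space_def by unfold_locales auto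
  show ?thesis by (rule FX_eberlein)
qed


end
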